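(* Let $T$ be a full binary tree of order $n$. Then $b(T)\le \lceil n^{1/2}\rceil$.
   Context: A full binary tree is a rooted tree in which every vertex has either $0$ or $2$ children. Burning process of a connected graph $G$: initially all vertices are unburned. In each round $r\ge 1$, one vertex $x_r$ that is unburned at the end of round $r-1$ is chosen as the source of round $r$; in round $r$ the source $x_r$ becomes burned, and so does every vertex that was unburned at the end of round $r-1$ and is adjacent to a vertex burned at the end of round $r-1$. Burned vertices stay burned. If all vertices are burned at the end of round $k$ (and not earlier), $(x_1,\dots,x_k)$ is called a burning sequence for $G$ of length $k$. The burning number $b(G)$ is the minimum length of a burning sequence for $G$. *)

theory Defs
  imports Complex_Main
begin

text \<open>burned V E xs r = set of vertices burned at the end of round r, when the
  source of round r+1 is xs ! r (rounds are numbered from 1 in the paper).\<close>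
fun burned :: "'a set \<Rightarrow> ('a \<Rightarrow> 'a \<Rightarrow> bool) \<Rightarrow> 'a list \<Rightarrow> nat \<Rightarrow> 'a set" where
  "burned V E xs 0 = {}"
| "burned V E xs (Suc r) =
     burned V E xs r \<union> {xs ! r} \<union> {v \<in> V. \<exists>u \<in> burned V E xs r. E u v}"

definition burning_seq :: "'a set \<Rightarrow> ('a \<Rightarrow> 'a \<Rightarrow> bool) \<Rightarrow> 'a list \<Rightarrow> bool" where
  "burning_seq V E xs \<longleftrightarrow>
     set xs \<subseteq> V \<and>
     (\<forall>r < length xs. xs ! r \<notin> burned V E xs r) \<and>
     burned V E xs (length xs) = V \<and>
     (\<forall>r < length xs. burned V E xs r \<noteq> V)"

definition burning_number :: "'a set \<Rightarrow> ('a \<Rightarrow> 'a \<Rightarrow> bool) \<Rightarrow> nat" where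
  "burning_number V E = (LEAST k. \<exists>xs. burning_seq V E xs \<and> length xs = k)"

text \<open>Shape of a full binary tree: every vertex has 0 or 2 children. Vertices are
  identified with root-to-vertex paths (lists of left/right choices).\<close>
datatype fbt = Leaf | Node fbt fbt

fun fbt_verts :: "fbt \<Rightarrow> bool list set" where
  "fbt_verts Leaf = {[]}"
| "fbt_verts (Node l r) = {[]} \<union> Cons False ` fbt_verts l \<union> Cons True ` fbt_verts r"

definition fbt_adj :: "bool list \<Rightarrow> bool list \<Rightarrow> bool" where
  "fbt_adj p q \<longleftrightarrow> (\<exists>b. q = p @ [b] \<or> p = q @ [b])"

end

theory Submission
  imports Defs
begin

fun lcp :: "bool list \<Rightarrow> bool list \<Rightarrow> nat" where
  "lcp (a#x) (b#y) = (if a = b then Suc (lcp x y) else 0)"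
| "lcp _ _ = 0"

lemma lcp_le1: "lcp x y \<le> length x"
  by (induction x y rule: lcp.induct) auto
lemma lcp_le2: "lcp x y \<le> length y"
  by (induction x y rule: lcp.induct) auto
lemma lcp_comm: "lcp x y = lcp y x"
  by (induction x y rule: lcp.induct) (auto elim: lcp.elims)
lemma lcp_app_same: "lcp (p @ x) (p @ y) = length p + lcp x y"
  by (induction p) auto
lemma lcp_self_app: "lcp x (x @ z) = length x"
  by (induction x) auto
lemma lcp_mono: "lcp x y \<le> lcp x (y @ z)"
  by (induction x y rule: lcp.induct) auto
lemma lcp_app_lt: "lcp x y < length y \<Longrightarrow> lcp x (y @ z) = lcp x y"
  by (induction x y rule: lcp.induct) auto
lemma lcp_full: "lcp x v = length v \<Longrightarrow> \<exists>z. x = v @ z"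
  by (induction x v rule: lcp.induct) (auto split: if_splits)

definition dst :: "bool list \<Rightarrow> bool list \<Rightarrow> nat" where
  "dst x y = length x + length y - 2 * lcp x y"

lemma dst_comm: "dst x y = dst y x"
  by (simp add: dst_def lcp_comm)
lemma dst_app: "dst v (v @ z) = length z"
  by (simp add: dst_def lcp_self_app)
lemma dst_app': "dst (v @ z) v = length z"
  by (simp add: dst_comm dst_app)
lemma dst_zero: "dst x y = 0 \<Longrightarrow> x = y"
proof -
  assume "dst x y = 0"
  then have "lcp x y = length y" "length x = length y"
    using lcp_le1[of x y] lcp_le2[of x y] by (auto simp: dst_def)
  then show "x = y" using lcp_full[of x y] by auto
qed
lemma dst_snoc: "dst c (y @ [b]) \<le> dst c y + 1"
  using lcp_mono[of c y "[b]"] lcp_le1[of c y] lcp_le2[of c y]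
    lcp_le1[of c "y@[b]"] lcp_le2[of c "y@[b]"]
  by (simp add: dst_def)
lemma dst_fork: "a \<noteq> b \<Longrightarrow> dst (d @ [a]) (d @ b # z) = length z + 2"
proof -
  assume "a \<noteq> b"
  then have "lcp (d @ [a]) (d @ b # z) = length d"
    using lcp_app_same[of d "[a]" "b#z"] by simp
  then show ?thesis by (simp add: dst_def)
qed

definition pc :: "bool list set \<Rightarrow> bool" where
  "pc W \<longleftrightarrow> (\<forall>x y. x @ y \<in> W \<longrightarrow> x \<in> W)"

lemma nbr:
  assumes "pc V" "x \<in> V" "v \<in> V" "dst x v = Suc s"
  shows "\<exists>y\<in>V. fbt_adj y v \<and> dst x y = s"
proof (cases "lcp x v < length v")
  case True
  then have "v \<noteq> []" by auto
  define y where "y = butlast v"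
  have vy: "v = y @ [last v]" using \<open>v \<noteq> []\<close> by (simp add: y_def)
  have "lcp x v = lcp x y"
  proof (cases "lcp x y < length y")
    case True
    then show ?thesis using vy lcp_app_lt by metis
  next
    case False
    then have "lcp x y = length y" using lcp_le2[of x y] by simp
    moreover have "lcp x y \<le> lcp x v" using lcp_mono[of x y "[last v]"] vy by simp
    moreover have "lcp x v < length y + 1" using \<open>lcp x v < length v\<close> vy
      by (metis length_append_singleton Suc_eq_plus1)
    ultimately show ?thesis by simp
  qed
  moreover have lv: "length v = length y + 1" using vy
    by (metis length_append_singleton Suc_eq_plus1)
  ultimately have "dst x y = s" using assms(4) lcp_le1[of x y] lcp_le2[of x y]
    by (simp add: dst_def)
  moreover have "y \<in> V" using assms(1,3) vy unfolding pc_def by metis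
  moreover have "fbt_adj y v" unfolding fbt_adj_def using vy by blast
  ultimately show ?thesis by blast
next
  case False
  then have "lcp x v = length v" using lcp_le2[of x v] by simp
  then obtain z where xz: "x = v @ z" using lcp_full by blast
  then have "length z = Suc s" using assms(4) by (simp add: dst_app')
  then obtain a z' where z: "z = a # z'" by (cases z) auto
  define y where "y = v @ [a]"
  have "x = y @ z'" using xz z y_def by simp
  then have "dst x y = s" using \<open>length z = Suc s\<close> z by (simp add: dst_app')
  moreover have "y \<in> V" using assms(1,2) \<open>x = y @ z'\<close> unfolding pc_def by metis
  moreover have "fbt_adj y v" unfolding fbt_adj_def y_def by blast
  ultimately show ?thesis by blast
qed


lemma burned_app: "r \<le> length xs \<Longrightarrow> burned V E (xs @ ys) r = burned V E xs r"
  by (induction r) (auto simp: nth_append)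

lemma burned_mono: "r \<le> r' \<Longrightarrow> burned V E xs r \<subseteq> burned V E xs r'"
proof (induction r' arbitrary: r)
  case 0 then show ?case by simp
next
  case (Suc r')
  show ?case
  proof (cases "r = Suc r'")
    case True then show ?thesis by simp
  next
    case False
    then have "r \<le> r'" using Suc.prems by simp
    then have "burned V E xs r \<subseteq> burned V E xs r'" using Suc.IH by simp
    moreover have "burned V E xs r' \<subseteq> burned V E xs (Suc r')" by auto
    ultimately show ?thesis by blast
  qed
qed

lemma burned_sub: "set xs \<subseteq> V \<Longrightarrow> r \<le> length xs \<Longrightarrow> burned V E xs r \<subseteq> V"
proof (induction r)
  case 0 then show ?case by simp
next
  case (Suc r)
  then have "xs ! r \<in> V" by auto
  then show ?case using Suc by auto
qed

lemma spread:
  assumes "pc V" "x \<in> V" "x \<in> burned V fbt_adj xs r"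
  shows "v \<in> V \<Longrightarrow> dst x v \<le> s \<Longrightarrow> v \<in> burned V fbt_adj xs (r + s)"
proof (induction s arbitrary: v)
  case 0
  then have "v = x" using dst_zero by auto
  then show ?case using assms by simp
next
  case (Suc s)
  show ?case
  proof (cases "dst x v \<le> s")
    case True
    then have "v \<in> burned V fbt_adj xs (r + s)" using Suc.IH Suc.prems(1) by blast
    moreover have "burned V fbt_adj xs (r + s) \<subseteq> burned V fbt_adj xs (r + Suc s)"
      using burned_mono[of "r+s" "r + Suc s"] by simp
    ultimately show ?thesis by blast
  next
    case False
    then have "dst x v = Suc s" using Suc.prems by simp
    then obtain y where y: "y \<in> V" "fbt_adj y v" "dst x y = s"
      using nbr[OF assms(1,2) Suc.prems(1)] by blast
    then have "y \<in> burned V fbt_adj xs (r + s)" using Suc.IH by simp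
    then show ?thesis using y Suc.prems(1) by auto
  qed
qed

lemma greedy:
  assumes pcV: "pc V" and ne: "V \<noteq> {}" and CV: "\<forall>i<k. C i \<in> V"
    and cov: "\<forall>v\<in>V. \<exists>i<k. dst (C i) v + i + 1 \<le> k"
  shows "\<exists>xs. burning_seq V fbt_adj xs \<and> length xs \<le> k"
proof -
  let ?B = "burned V fbt_adj"
  have main: "i \<le> k \<Longrightarrow> (\<exists>xs. burning_seq V fbt_adj xs \<and> length xs \<le> k) \<or>
     (\<exists>xs. length xs = i \<and> set xs \<subseteq> V \<and> (\<forall>r<i. xs!r \<notin> ?B xs r) \<and>
         (\<forall>r\<le>i. ?B xs r \<noteq> V) \<and> (\<forall>l<i. C l \<in> ?B xs (Suc l)))" for i
  proof (induction i)
    case 0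
    then show ?case using ne by (intro disjI2 exI[of _ "[]"]) auto
  next
    case (Suc i)
    then have "i \<le> k" by simp
    from Suc.IH[OF this] show ?case
    proof
      assume "\<exists>xs. burning_seq V fbt_adj xs \<and> length xs \<le> k"
      then show ?thesis by blast
    next
      assume "\<exists>xs. length xs = i \<and> set xs \<subseteq> V \<and> (\<forall>r<i. xs!r \<notin> ?B xs r) \<and>
         (\<forall>r\<le>i. ?B xs r \<noteq> V) \<and> (\<forall>l<i. C l \<in> ?B xs (Suc l))"
      then obtain xs where xs: "length xs = i" "set xs \<subseteq> V" "\<forall>r<i. xs!r \<notin> ?B xs r"
         "\<forall>r\<le>i. ?B xs r \<noteq> V" "\<forall>l<i. C l \<in> ?B xs (Suc l)" by blast
      define B where "B = ?B xs i"
      have BV: "B \<subseteq> V" unfolding B_def using burned_sub[OF xs(2)] xs(1) by simp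
      have "B \<noteq> V" unfolding B_def using xs(4) by simp
      then have ex: "\<exists>u. u \<in> V - B" using BV by blast
      define y where "y = (if C i \<notin> B then C i else (SOME u. u \<in> V - B))"
      have "i < k" using Suc.prems by simp
      then have "C i \<in> V" using CV by simp
      have y: "y \<in> V - B"
      proof (cases "C i \<in> B")
        case True then show ?thesis unfolding y_def using someI_ex[OF ex] by simp
      next
        case False then show ?thesis unfolding y_def using \<open>C i \<in> V\<close> by simp
      qed
      define xs' where "xs' = xs @ [y]"
      have same: "?B xs' r = ?B xs r" if "r \<le> i" for r
        using burned_app[of r xs V fbt_adj "[y]"] that xs(1) unfolding xs'_def by simp
      have nth': "r < i \<Longrightarrow> xs' ! r = xs ! r" for r unfolding xs'_def using xs(1)
        by (simp add: nth_append)
      have nthi: "xs' ! i = y" unfolding xs'_def using xs(1) by (metis nth_append_length)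
      have Bsuc: "?B xs' (Suc i) = B \<union> {y} \<union> {v \<in> V. \<exists>u \<in> B. fbt_adj u v}"
        using same[of i] nthi unfolding B_def by simp
      have Ci: "C i \<in> ?B xs' (Suc i)"
      proof (cases "C i \<in> B")
        case True then show ?thesis using Bsuc by blast
      next
        case False then have "y = C i" unfolding y_def by simp
        then show ?thesis using Bsuc by blast
      qed
      have len': "length xs' = Suc i" using xs(1) xs'_def by simp
      have set': "set xs' \<subseteq> V" using xs(2) y xs'_def by auto
      have src': "\<forall>r<Suc i. xs'!r \<notin> ?B xs' r"
      proof (intro allI impI)
        fix r assume "r < Suc i"
        then show "xs'!r \<notin> ?B xs' r"
        proof (cases "r < i")
          case True then show ?thesis using same[of r] nth'[of r] xs(3) by simp
        next
          case False then have "r = i" using \<open>r < Suc i\<close> by simp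
          then show ?thesis using same[of i] nthi y B_def by simp
        qed
      qed
      have lt': "\<forall>r\<le>i. ?B xs' r \<noteq> V" using same xs(4) by simp
      have Cl': "\<forall>l<Suc i. C l \<in> ?B xs' (Suc l)"
      proof (intro allI impI)
        fix l assume "l < Suc i"
        then show "C l \<in> ?B xs' (Suc l)"
        proof (cases "l < i")
          case True then show ?thesis using same[of "Suc l"] xs(5) by simp
        next
          case False then show ?thesis using Ci \<open>l < Suc i\<close> by (simp add: less_Suc_eq)
        qed
      qed
      show ?thesis
      proof (cases "?B xs' (Suc i) = V")
        case True
        have "burning_seq V fbt_adj xs'" unfolding burning_seq_def
          using set' src' True lt' len' by (simp add: less_Suc_eq_le)
        then show ?thesis using len' Suc.prems by (intro disjI1 exI[of _ xs'] conjI) simp_all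
      next
        case False
        then have "\<forall>r\<le>Suc i. ?B xs' r \<noteq> V" using lt' by (simp add: le_Suc_eq)
        then show ?thesis using len' set' src' Cl' by (intro disjI2 exI[of _ xs'] conjI) assumption+
      qed
    qed
  qed
  show ?thesis
  proof (rule ccontr)
    assume nex: "\<not> (\<exists>xs. burning_seq V fbt_adj xs \<and> length xs \<le> k)"
    have "\<exists>xs. length xs = k \<and> set xs \<subseteq> V \<and> (\<forall>r<k. xs!r \<notin> ?B xs r) \<and>
         (\<forall>r\<le>k. ?B xs r \<noteq> V) \<and> (\<forall>l<k. C l \<in> ?B xs (Suc l))"
      using main[of k] nex by simp
    then obtain xs where xs: "length xs = k" "set xs \<subseteq> V"
         "\<forall>r\<le>k. ?B xs r \<noteq> V" "\<forall>l<k. C l \<in> ?B xs (Suc l)"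
      by blast
    have "V \<subseteq> ?B xs k"
    proof
      fix v assume "v \<in> V"
      then obtain l where l: "l < k" "dst (C l) v + l + 1 \<le> k" using cov by blast
      have "v \<in> ?B xs (Suc l + dst (C l) v)"
        using spread[OF pcV _ _ \<open>v \<in> V\<close>, of "C l" xs "Suc l" "dst (C l) v"] CV l xs(4) by simp
      moreover have "?B xs (Suc l + dst (C l) v) \<subseteq> ?B xs k"
        using l(2) by (intro burned_mono) linarith
      ultimately show "v \<in> ?B xs k" by blast
    qed
    moreover have "?B xs k \<subseteq> V" using burned_sub[OF xs(2)] xs(1) by simp
    ultimately show False using xs(3) by auto
  qed
qed


definition sub :: "bool list set \<Rightarrow> bool list \<Rightarrow> bool list set" where
  "sub W v = {w \<in> W. \<exists>z. w = v @ z}"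

definition ff :: "nat \<Rightarrow> nat" where
  "ff j = j * (j + 2) div 2"

lemma pc_diff_sub: assumes "pc W" shows "pc (W - sub W v)"
  unfolding pc_def
proof (intro allI impI)
  fix x y assume a: "x @ y \<in> W - sub W v"
  then have "x \<in> W" using assms unfolding pc_def by blast
  moreover have "x \<notin> sub W v"
  proof
    assume "x \<in> sub W v"
    then obtain z where "x = v @ z" unfolding sub_def by blast
    then have "x @ y = v @ (z @ y)" by simp
    then show False using a unfolding sub_def by blast
  qed
  ultimately show "x \<in> W - sub W v" by blast
qed

lemma sub_empty: "pc W \<Longrightarrow> v \<notin> W \<Longrightarrow> sub W v = {}"
  unfolding pc_def sub_def by blast

lemma sub_subset: "sub W v \<subseteq> W"
  unfolding sub_def by blast

lemma sub_self: "v \<in> W \<Longrightarrow> v \<in> sub W v"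
  unfolding sub_def by (metis (mono_tags, lifting) append_Nil2 mem_Collect_eq)

lemma sub_mem_W: "pc W \<Longrightarrow> w \<in> sub W v \<Longrightarrow> v \<in> W"
  unfolding pc_def sub_def by blast

lemma sub_split: "v \<in> W \<Longrightarrow> sub W v = insert v (sub W (v @ [a]) \<union> sub W (v @ [\<not>a]))"
proof
  assume "v \<in> W"
  show "sub W v \<subseteq> insert v (sub W (v @ [a]) \<union> sub W (v @ [\<not>a]))"
  proof
    fix w assume "w \<in> sub W v"
    then obtain z where w: "w \<in> W" "w = v @ z" unfolding sub_def by blast
    show "w \<in> insert v (sub W (v @ [a]) \<union> sub W (v @ [\<not>a]))"
    proof (cases z)
      case Nil then show ?thesis using w by simp
    next
      case (Cons x z')
      then have "w = (v @ [x]) @ z'" using w by simp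
      moreover have "x = a \<or> x = (\<not>a)" by auto
      ultimately show ?thesis using w(1) unfolding sub_def by blast
    qed
  qed
next
  assume "v \<in> W"
  then show "insert v (sub W (v @ [a]) \<union> sub W (v @ [\<not>a])) \<subseteq> sub W v"
    unfolding sub_def by (auto intro: exI[of _ "[]"])
qed

lemma card_sub_split:
  assumes "finite W" "v \<in> W"
  shows "card (sub W v) = 1 + card (sub W (v @ [a])) + card (sub W (v @ [\<not>a]))"
proof -
  have f1: "finite (sub W (v @ [a]))" "finite (sub W (v @ [\<not>a]))"
    using assms(1) sub_subset finite_subset by blast+
  have d1: "sub W (v @ [a]) \<inter> sub W (v @ [\<not>a]) = {}"
    unfolding sub_def by auto
  have d2: "v \<notin> sub W (v @ [a]) \<union> sub W (v @ [\<not>a])"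
    unfolding sub_def by auto
  show ?thesis
    using sub_split[OF assms(2), of a] f1 d1 d2
    by (simp add: card_Un_disjoint)
qed

lemma chain:
  assumes "finite W" "pc W" "v @ z \<in> W"
  shows "length z + 1 \<le> card (sub W v)"
proof -
  have "(\<lambda>i. v @ take i z) ` {0..length z} \<subseteq> sub W v"
  proof
    fix w assume "w \<in> (\<lambda>i. v @ take i z) ` {0..length z}"
    then obtain i where w: "w = v @ take i z" by blast
    have "w @ drop i z = v @ z" using w by simp
    then have "w @ drop i z \<in> W" using assms(3) by simp
    then have "w \<in> W" using assms(2) unfolding pc_def by blast
    then show "w \<in> sub W v" using w unfolding sub_def by blast
  qed
  moreover have "inj_on (\<lambda>i. v @ take i z) {0..length z}"
  proof (rule inj_onI)
    fix i i' assume "i \<in> {0..length z}" "i' \<in> {0..length z}" "v @ take i z = v @ take i' z"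
    then have "length (take i z) = length (take i' z)" by simp
    then show "i = i'" using \<open>i \<in> {0..length z}\<close> \<open>i' \<in> {0..length z}\<close> by simp
  qed
  moreover have "finite (sub W v)" using sub_subset assms(1) by (rule finite_subset)
  ultimately have "card {0..length z} \<le> card (sub W v)"
    by (intro card_inj_on_le) auto
  then show ?thesis by simp
qed

lemma ff_step1: "1 \<le> j \<Longrightarrow> ff j \<le> ff (j - 1) + j + 1"
proof -
  assume "1 \<le> j"
  then obtain i where j: "j = Suc i" by (cases j) auto
  have e: "j * (j + 2) = i * (i + 2) + 2 * i + 3" using j by (simp add: algebra_simps)
  have "(i * (i + 2) + 2 * i + 3) div 2 \<le> i * (i + 2) div 2 + i + 2" by linarith
  then show ?thesis unfolding ff_def using e j by simp
qed

lemma ff_step2: "2 \<le> j \<Longrightarrow> ff j \<le> ff (j - 2) + 2 * j"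
proof -
  assume "2 \<le> j"
  then obtain i where j: "j = i + 2" by (metis add.commute le_add_diff_inverse)
  have e: "j * (j + 2) = i * (i + 2) + 2 * (2 * i + 4)" using j by (simp add: algebra_simps)
  have "(i * (i + 2) + 2 * (2 * i + 4)) div 2 = i * (i + 2) div 2 + (2 * i + 4)" by simp
  then show ?thesis unfolding ff_def using e j by simp
qed

definition covers :: "bool list set \<Rightarrow> nat \<Rightarrow> bool" where
  "covers W j \<longleftrightarrow> (\<exists>c. (\<forall>i<j. c i \<in> insert [] W) \<and> (\<forall>w\<in>W. \<exists>i<j. dst (c i) w + i + 1 \<le> j))"

lemma step1:
  assumes IH: "\<And>W'. finite W' \<Longrightarrow> pc W' \<Longrightarrow> card W' \<le> ff (j - 1) \<Longrightarrow> covers W' (j - 1)"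
    and fin: "finite W" and pcR: "pc (W - R)" and RW: "R \<subseteq> W" and cR: "j + 1 \<le> card R"
    and cW: "card W \<le> ff j" and x: "x \<in> W" and cov: "\<forall>w\<in>R. dst x w + 1 \<le> j" and j1: "1 \<le> j"
  shows "covers W j"
proof -
  have "card (W - R) = card W - card R" using fin RW by (meson card_Diff_subset finite_subset)
  then have "card (W - R) \<le> ff (j - 1)" using cW cR ff_step1[OF j1] by linarith
  then obtain c' where c': "\<forall>i<j-1. c' i \<in> insert [] (W - R)"
     "\<forall>w\<in>W - R. \<exists>i<j-1. dst (c' i) w + i + 1 \<le> j - 1"
    using IH[of "W - R"] fin pcR unfolding covers_def by blast
  define c where "c i = (if i = 0 then x else c' (i - 1))" for i
  have A: "\<forall>i<j. c i \<in> insert [] W"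
  proof (intro allI impI)
    fix i assume "i < j"
    show "c i \<in> insert [] W"
    proof (cases "i = 0")
      case True then show ?thesis using x c_def by simp
    next
      case False then have "i - 1 < j - 1" using \<open>i < j\<close> by simp
      then show ?thesis using c'(1) False c_def by auto
    qed
  qed
  have B: "\<forall>w\<in>W. \<exists>i<j. dst (c i) w + i + 1 \<le> j"
  proof
    fix w assume "w \<in> W"
    show "\<exists>i<j. dst (c i) w + i + 1 \<le> j"
    proof (cases "w \<in> R")
      case True then show ?thesis using cov j1 c_def by (intro exI[of _ 0]) auto
    next
      case False
      then obtain i where i: "i < j - 1" "dst (c' i) w + i + 1 \<le> j - 1"
        using c'(2) \<open>w \<in> W\<close> by blast
      then show ?thesis using c_def by (intro exI[of _ "Suc i"]) auto
    qed
  qed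
  show ?thesis unfolding covers_def using A B by blast
qed

lemma step2:
  assumes IH: "\<And>W'. finite W' \<Longrightarrow> pc W' \<Longrightarrow> card W' \<le> ff (j - 2) \<Longrightarrow> covers W' (j - 2)"
    and fin: "finite W" and pcR: "pc (W - R)" and RW: "R \<subseteq> W" and cR: "2 * j \<le> card R"
    and cW: "card W \<le> ff j" and x: "x \<in> W" and y: "y \<in> W"
    and cov: "\<forall>w\<in>R. dst x w + 1 \<le> j \<or> dst y w + 2 \<le> j" and j2: "2 \<le> j"
  shows "covers W j"
proof -
  have "card (W - R) = card W - card R" using fin RW by (meson card_Diff_subset finite_subset)
  then have "card (W - R) \<le> ff (j - 2)" using cW cR ff_step2[OF j2] by linarith
  then obtain c' where c': "\<forall>i<j-2. c' i \<in> insert [] (W - R)"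
     "\<forall>w\<in>W - R. \<exists>i<j-2. dst (c' i) w + i + 1 \<le> j - 2"
    using IH[of "W - R"] fin pcR unfolding covers_def by blast
  define c where "c i = (if i = 0 then x else if i = 1 then y else c' (i - 2))" for i
  have A: "\<forall>i<j. c i \<in> insert [] W"
  proof (intro allI impI)
    fix i assume "i < j"
    show "c i \<in> insert [] W"
    proof (cases "i = 0 \<or> i = 1")
      case True then show ?thesis using x y c_def by auto
    next
      case False then have "i - 2 < j - 2" using \<open>i < j\<close> by linarith
      then show ?thesis using c'(1) False c_def by auto
    qed
  qed
  have B: "\<forall>w\<in>W. \<exists>i<j. dst (c i) w + i + 1 \<le> j"
  proof
    fix w assume "w \<in> W"
    show "\<exists>i<j. dst (c i) w + i + 1 \<le> j"
    proof (cases "w \<in> R")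
      case True
      then have "dst x w + 1 \<le> j \<or> dst y w + 2 \<le> j" using cov by blast
      then show ?thesis
      proof
        assume "dst x w + 1 \<le> j" then show ?thesis using j2 c_def by (intro exI[of _ 0]) auto
      next
        assume "dst y w + 2 \<le> j" then show ?thesis using j2 c_def by (intro exI[of _ 1]) auto
      qed
    next
      case False
      then obtain i where i: "i < j - 2" "dst (c' i) w + i + 1 \<le> j - 2"
        using c'(2) \<open>w \<in> W\<close> by blast
      then show ?thesis using c_def by (intro exI[of _ "Suc (Suc i)"]) auto
    qed
  qed
  show ?thesis unfolding covers_def using A B by blast
qed


lemma cover: "finite W \<Longrightarrow> pc W \<Longrightarrow> card W \<le> ff j \<Longrightarrow> covers W j"
proof (induction j arbitrary: W rule: less_induct)
  case (less j W)
  note fin = less.prems(1) and pcW = less.prems(2) and cW = less.prems(3)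
  show ?case
  proof (cases "\<forall>w\<in>W. length w + 1 \<le> j")
    case True
    show ?thesis unfolding covers_def
    proof (intro exI[of _ "\<lambda>_. []"] conjI)
      show "\<forall>i<j. [] \<in> insert [] W" by simp
      show "\<forall>w\<in>W. \<exists>i<j. dst [] w + i + 1 \<le> j"
      proof
        fix w assume "w \<in> W"
        then have "length w + 1 \<le> j" using True by blast
        moreover have "dst [] w = length w" using dst_app[of "[]" w] by simp
        ultimately show "\<exists>i<j. dst [] w + i + 1 \<le> j" by (intro exI[of _ 0]) auto
      qed
    qed
  next
    case False
    then obtain w0 where w0: "w0 \<in> W" "j \<le> length w0" by auto
    have "sub W [] = W" unfolding sub_def by auto
    then have h: "length w0 + 1 \<le> card W" using chain[OF fin pcW, of "[]" w0] w0 by simp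
    have j2: "2 \<le> j"
    proof (rule ccontr)
      assume "\<not> 2 \<le> j" then have "j = 0 \<or> j = 1" by auto
      then have "ff j \<le> j" unfolding ff_def by auto
      then show False using h w0(2) cW by linarith
    qed
    define L where "L = Max (length ` W)"
    have Wne: "W \<noteq> {}" using w0 by auto
    have maxL: "\<forall>w\<in>W. length w \<le> L" unfolding L_def using fin by (auto intro: Max_ge)
    have "L \<in> length ` W" unfolding L_def using fin Wne by (intro Max_in) auto
    then obtain b where b: "b \<in> W" "length b = L" by auto
    have jL: "j \<le> L" using w0 maxL by force
    define p where "p = L - j"
    have Lp: "L = p + j" using jL p_def by simp
    define d where "d = take p b"
    define \<beta> where "\<beta> = b ! p"
    define c0 where "c0 = d @ [\<beta>]"
    define s where "s = d @ [\<not>\<beta>]"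
    have plt: "p < length b" using b(2) Lp j2 by simp
    have c0b: "c0 = take (Suc p) b" unfolding c0_def d_def \<beta>_def using plt
      by (simp add: take_Suc_conv_app_nth)
    have bc0: "b = c0 @ drop (Suc p) b" using c0b by simp
    have ld: "length d = p" using plt d_def by simp
    have lc0: "length c0 = Suc p" using ld c0_def by simp
    have ls: "length s = Suc p" using ld s_def by simp
    have "c0 @ drop (Suc p) b \<in> W" using b(1) bc0 by simp
    then have c0W: "c0 \<in> W" using pcW unfolding pc_def by blast
    have dW: "d \<in> W" using c0W pcW unfolding pc_def c0_def by blast
    have "length (drop (Suc p) b) + 1 \<le> card (sub W c0)"
      using chain[OF fin pcW, of c0 "drop (Suc p) b"] bc0 b(1) by simp
    then have subc0card: "j \<le> card (sub W c0)" using b(2) Lp by simp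
    have cov_c0: "\<forall>w\<in>sub W c0. dst c0 w + 1 \<le> j"
    proof
      fix w assume w: "w \<in> sub W c0"
      then obtain z where z: "w \<in> W" "w = c0 @ z" unfolding sub_def by blast
      have "length w \<le> L" using maxL z(1) by blast
      then have "length z + 1 \<le> j" using z(2) lc0 Lp by simp
      then show "dst c0 w + 1 \<le> j" using z(2) dst_app by simp
    qed
    have dc0: "dst c0 d = 1" using dst_app'[of d "[\<beta>]"] c0_def by simp
    have split_d: "sub W d = insert d (sub W c0 \<union> sub W s)"
      using sub_split[OF dW, of \<beta>] c0_def s_def by simp
    have card_d: "card (sub W d) = 1 + card (sub W c0) + card (sub W s)"
      using card_sub_split[OF fin dW, of \<beta>] c0_def s_def by simp
    have subdW: "sub W d \<subseteq> W" by (rule sub_subset)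
    have pcd: "pc (W - sub W d)" by (rule pc_diff_sub[OF pcW])
    have cdW: "card (sub W d) \<le> card W" using fin subdW card_mono by blast
    have IH1: "\<And>W'. finite W' \<Longrightarrow> pc W' \<Longrightarrow> card W' \<le> ff (j-1) \<Longrightarrow> covers W' (j-1)"
      using less.IH j2 by simp
    have IH2: "\<And>W'. finite W' \<Longrightarrow> pc W' \<Longrightarrow> card W' \<le> ff (j-2) \<Longrightarrow> covers W' (j-2)"
      using less.IH j2 by simp
    have sw_form: "\<exists>z. w = d @ (\<not>\<beta>) # z" if "w \<in> sub W s" for w
      using that unfolding sub_def s_def by auto
    have dst_c0_s: "dst c0 (d @ (\<not>\<beta>) # z) = length z + 2" for z
      using dst_fork[of \<beta> "\<not>\<beta>" d z] c0_def by simp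
    show ?thesis
    proof (cases "\<forall>w\<in>sub W s. length w + 2 \<le> L")
      case True
      show ?thesis
      proof (rule step1[OF IH1 fin pcd subdW _ cW c0W])
        show "j + 1 \<le> card (sub W d)" using card_d subc0card by simp
        show "\<forall>w\<in>sub W d. dst c0 w + 1 \<le> j"
        proof
          fix w assume "w \<in> sub W d"
          then have "w = d \<or> w \<in> sub W c0 \<or> w \<in> sub W s" using split_d by blast
          then show "dst c0 w + 1 \<le> j"
          proof (elim disjE)
            assume "w = d" then show ?thesis using dc0 j2 by simp
          next
            assume "w \<in> sub W c0" then show ?thesis using cov_c0 by blast
          next
            assume ws: "w \<in> sub W s"
            then obtain z where z: "w = d @ (\<not>\<beta>) # z" using sw_form by blast
            have "length w + 2 \<le> L" using True ws by blast
            then have "length z + 3 \<le> j" using z ld Lp by simp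
            then show ?thesis using z dst_c0_s by simp
          qed
        qed
        show "1 \<le> j" using j2 by simp
      qed
    next
      case False
      then obtain w1 where w1: "w1 \<in> sub W s" "L < length w1 + 2" by auto
      have sW: "s \<in> W" using sub_mem_W[OF pcW w1(1)] .
      show ?thesis
      proof (cases "\<forall>w\<in>sub W s. length w + 1 \<le> L")
        case True
        obtain z1 where z1: "w1 = s @ z1" using w1(1) unfolding sub_def by blast
        have "w1 \<in> W" using w1(1) sub_subset by blast
        then have "length z1 + 1 \<le> card (sub W s)" using chain[OF fin pcW, of s z1] z1 by simp
        moreover have "j \<le> length z1 + 2" using w1(2) z1 ls Lp by simp
        ultimately have cs: "j - 1 \<le> card (sub W s)" by linarith
        show ?thesis
        proof (rule step2[OF IH2 fin pcd subdW _ cW c0W sW _ j2])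
          show "2 * j \<le> card (sub W d)" using card_d subc0card cs by linarith
          show "\<forall>w\<in>sub W d. dst c0 w + 1 \<le> j \<or> dst s w + 2 \<le> j"
          proof
            fix w assume "w \<in> sub W d"
            then have "w = d \<or> w \<in> sub W c0 \<or> w \<in> sub W s" using split_d by blast
            then show "dst c0 w + 1 \<le> j \<or> dst s w + 2 \<le> j"
            proof (elim disjE)
              assume "w = d" then show ?thesis using dc0 j2 by simp
            next
              assume "w \<in> sub W c0" then show ?thesis using cov_c0 by blast
            next
              assume ws: "w \<in> sub W s"
              then obtain z where z: "w = s @ z" unfolding sub_def by blast
              have "length w + 1 \<le> L" using True ws by blast
              then have "length z + 2 \<le> j" using z ls Lp by simp
              then show ?thesis using z dst_app by simp
            qed
          qed
        qed
      next
        case False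
        then obtain e where e: "e \<in> sub W s" "\<not> length e + 1 \<le> L" by auto
        have eW: "e \<in> W" using e(1) sub_subset by blast
        have le: "length e = L" using e(2) maxL eW by force
        obtain z where z: "e = s @ z" using e(1) unfolding sub_def by blast
        have lz: "length z = j - 1" using le z ls Lp by simp
        then obtain \<gamma> z' where zz: "z = \<gamma> # z'" using j2 by (cases z) auto
        define y1 where "y1 = s @ [\<gamma>]"
        define s' where "s' = s @ [\<not>\<gamma>]"
        have ey: "e = y1 @ z'" using z zz y1_def by simp
        have y1W: "y1 \<in> W" using eW ey pcW unfolding pc_def by blast
        have card_s: "card (sub W s) = 1 + card (sub W y1) + card (sub W s')"
          using card_sub_split[OF fin sW, of \<gamma>] y1_def s'_def by simp
        have "length z' + 1 \<le> card (sub W y1)" using chain[OF fin pcW, of y1 z'] ey eW by simp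
        then have cy1: "j - 1 \<le> card (sub W y1)" using lz zz by simp
        have split_s: "sub W s = insert s (sub W y1 \<union> sub W s')"
          using sub_split[OF sW, of \<gamma>] y1_def s'_def by simp
        show ?thesis
        proof (cases "s' \<in> W")
          case True
          have "finite (sub W s')" using sub_subset fin by (rule finite_subset)
          moreover have "s' \<in> sub W s'" using sub_self[OF True] .
          ultimately have "1 \<le> card (sub W s')" by (metis One_nat_def Suc_leI card_gt_0_iff empty_iff)
          then have cs: "j + 1 \<le> card (sub W s)" using card_s cy1 j2 by linarith
          show ?thesis
          proof (rule step1[OF IH1 fin pc_diff_sub[OF pcW] sub_subset cs cW sW])
            show "\<forall>w\<in>sub W s. dst s w + 1 \<le> j"
            proof
              fix w assume ws: "w \<in> sub W s"
              then obtain u where u: "w \<in> W" "w = s @ u" unfolding sub_def by blast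
              have "length w \<le> L" using maxL u(1) by blast
              then have "length u + 1 \<le> j" using u(2) ls Lp by simp
              then show "dst s w + 1 \<le> j" using u(2) dst_app by simp
            qed
            show "1 \<le> j" using j2 by simp
          qed
        next
          case False
          have e0: "sub W s' = {}" using sub_empty[OF pcW False] .
          have cd: "1 + 2 * j \<le> card (sub W d)" using card_d card_s subc0card cy1 e0 j2 by simp
          have j3: "3 \<le> j"
          proof (rule ccontr)
            assume "\<not> 3 \<le> j" then have "j = 2" using j2 by simp
            then show False using cd cdW cW unfolding ff_def by simp
          qed
          show ?thesis
          proof (rule step2[OF IH2 fin pcd subdW _ cW c0W y1W _ j2])
            show "2 * j \<le> card (sub W d)" using cd by linarith
            show "\<forall>w\<in>sub W d. dst c0 w + 1 \<le> j \<or> dst y1 w + 2 \<le> j"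
            proof
              fix w assume "w \<in> sub W d"
              then have "w = d \<or> w \<in> sub W c0 \<or> w = s \<or> w \<in> sub W y1"
                using split_d split_s e0 by blast
              then show "dst c0 w + 1 \<le> j \<or> dst y1 w + 2 \<le> j"
              proof (elim disjE)
                assume "w = d" then show ?thesis using dc0 j2 by simp
              next
                assume "w \<in> sub W c0" then show ?thesis using cov_c0 by blast
              next
                assume "w = s"
                then have "dst c0 w = 2" using dst_c0_s[of "[]"] s_def by simp
                then show ?thesis using j3 by simp
              next
                assume wy: "w \<in> sub W y1"
                then obtain u where u: "w \<in> W" "w = y1 @ u" unfolding sub_def by blast
                have "length w \<le> L" using maxL u(1) by blast
                then have "length u + 2 \<le> j" using u(2) ls Lp y1_def by simp
                then show ?thesis using u(2) dst_app by simp
              qed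
            qed
          qed
        qed
      qed
    qed
  qed
qed


fun fbt_int :: "fbt \<Rightarrow> bool list set" where
  "fbt_int Leaf = {}"
| "fbt_int (Node l r) = {[]} \<union> Cons False ` fbt_int l \<union> Cons True ` fbt_int r"

lemma finite_verts: "finite (fbt_verts T)"
  by (induction T) auto
lemma finite_int: "finite (fbt_int T)"
  by (induction T) auto
lemma nil_verts: "[] \<in> fbt_verts T"
  by (cases T) auto
lemma int_sub: "fbt_int T \<subseteq> fbt_verts T"
  by (induction T) auto

lemma pc_verts: "pc (fbt_verts T)"
  unfolding pc_def
proof (induction T)
  case Leaf then show ?case by simp
next
  case (Node l r)
  show ?case
  proof (intro allI impI)
    fix x y assume h: "x @ y \<in> fbt_verts (Node l r)"
    show "x \<in> fbt_verts (Node l r)"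
    proof (cases x)
      case Nil then show ?thesis by simp
    next
      case (Cons a x')
      then have "a # (x' @ y) \<in> fbt_verts (Node l r)" using h by simp
      then have "(a = False \<and> x' @ y \<in> fbt_verts l) \<or> (a = True \<and> x' @ y \<in> fbt_verts r)" by auto
      then show ?thesis using Node.IH Cons by auto
    qed
  qed
qed

lemma pc_int: "pc (fbt_int T)"
  unfolding pc_def
proof (induction T)
  case Leaf then show ?case by simp
next
  case (Node l r)
  show ?case
  proof (intro allI impI)
    fix x y assume h: "x @ y \<in> fbt_int (Node l r)"
    show "x \<in> fbt_int (Node l r)"
    proof (cases x)
      case Nil then show ?thesis by simp
    next
      case (Cons a x')
      then have "a # (x' @ y) \<in> fbt_int (Node l r)" using h by simp
      then have "(a = False \<and> x' @ y \<in> fbt_int l) \<or> (a = True \<and> x' @ y \<in> fbt_int r)" by auto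
      then show ?thesis using Node.IH Cons by auto
    qed
  qed
qed

lemma card_node:
  assumes "finite X" "finite Y"
  shows "card ({[]} \<union> Cons False ` X \<union> Cons True ` Y) = 1 + card X + card Y"
proof -
  have i1: "card (Cons False ` X) = card X" by (rule card_image) (simp add: inj_on_def)
  have i2: "card (Cons True ` Y) = card Y" by (rule card_image) (simp add: inj_on_def)
  have d: "Cons False ` X \<inter> Cons True ` Y = {}" by auto
  have "card (Cons False ` X \<union> Cons True ` Y) = card X + card Y"
    using card_Un_disjoint[OF finite_imageI[OF assms(1)] finite_imageI[OF assms(2)] d] i1 i2 by simp
  moreover have "[] \<notin> Cons False ` X \<union> Cons True ` Y" by auto
  ultimately show ?thesis using assms by simp
qed

lemma card_verts: "card (fbt_verts T) = 2 * card (fbt_int T) + 1"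
proof (induction T)
  case Leaf then show ?case by simp
next
  case (Node l r)
  then show ?case
    using card_node[OF finite_verts finite_verts, of l r] card_node[OF finite_int finite_int, of l r]
    by simp
qed

lemma leaf_parent: "v \<in> fbt_verts T \<Longrightarrow> v \<notin> fbt_int T \<Longrightarrow> v \<noteq> [] \<Longrightarrow> butlast v \<in> fbt_int T"
proof (induction T arbitrary: v)
  case Leaf then show ?case by simp
next
  case (Node l r)
  then obtain a u where v: "v = a # u" by (cases v) auto
  show ?case
  proof (cases a)
    case False
    then have u: "u \<in> fbt_verts l" "u \<notin> fbt_int l" using Node.prems v by auto
    show ?thesis
    proof (cases "u = []")
      case True then show ?thesis using v by simp
    next
      case nn: False
      then have "butlast u \<in> fbt_int l" using Node.IH(1) u by blast
      then show ?thesis using v nn False by simp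
    qed
  next
    case True
    then have u: "u \<in> fbt_verts r" "u \<notin> fbt_int r" using Node.prems v by auto
    show ?thesis
    proof (cases "u = []")
      case True then show ?thesis using v by simp
    next
      case nn: False
      then have "butlast u \<in> fbt_int r" using Node.IH(2) u by blast
      then show ?thesis using v nn True by simp
    qed
  qed
qed

lemma half_le: "2 * a \<le> (x::nat) \<Longrightarrow> a \<le> x div 2"
  by linarith

theorem mainTheorem9:
  fixes T :: fbt and n :: nat
  assumes "n = card (fbt_verts T)"
  shows "burning_number (fbt_verts T) fbt_adj \<le> nat \<lceil>sqrt (real n)\<rceil>"
proof -
  define V where "V = fbt_verts T"
  define W where "W = fbt_int T"
  define K where "K = nat \<lceil>sqrt (real n)\<rceil>"
  have n1: "n = 2 * card W + 1" using assms card_verts W_def by simp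
  have sK: "sqrt (real n) \<le> real K"
  proof -
    have "sqrt (real n) \<le> real_of_int \<lceil>sqrt (real n)\<rceil>" by (rule le_of_int_ceiling)
    moreover have "0 \<le> sqrt (real n)" by simp
    then have "0 \<le> \<lceil>sqrt (real n)\<rceil>" by linarith
    ultimately show ?thesis unfolding K_def by simp
  qed
  have "real n = sqrt (real n) ^ 2" by simp
  also have "\<dots> \<le> real K ^ 2" using sK by (intro power_mono) auto
  finally have "real n \<le> real (K * K)" by (simp add: power2_eq_square)
  then have nK: "n \<le> K * K" by linarith
  have K1: "1 \<le> K"
  proof (rule ccontr)
    assume "\<not> 1 \<le> K" then have "K = 0" by simp
    then show False using nK n1 by simp
  qed
  then obtain m where m: "K = Suc m" by (cases K) auto
  have "K * K = m * (m + 2) + 1" using m by (simp add: algebra_simps)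
  then have "2 * card W \<le> m * (m + 2)" using nK n1 by linarith
  then have "card W \<le> m * (m + 2) div 2" by (rule half_le)
  then have "card W \<le> ff (K - 1)" unfolding ff_def using m by simp
  then have "covers W (K - 1)" using cover[OF _ _] finite_int pc_int W_def by blast
  then obtain c where c: "\<forall>i<K-1. c i \<in> insert [] W" "\<forall>w\<in>W. \<exists>i<K-1. dst (c i) w + i + 1 \<le> K - 1"
    unfolding covers_def by blast
  define C where "C i = (if i < K - 1 then c i else [])" for i
  have WV: "insert [] W \<subseteq> V" using int_sub nil_verts V_def W_def by auto
  have CV: "\<forall>i<K. C i \<in> V"
    using c(1) WV nil_verts V_def C_def by auto
  have cov: "\<forall>v\<in>V. \<exists>i<K. dst (C i) v + i + 1 \<le> K"
  proof
    fix v assume vV: "v \<in> V"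
    show "\<exists>i<K. dst (C i) v + i + 1 \<le> K"
    proof (cases "v \<in> W")
      case True
      then obtain i where i: "i < K - 1" "dst (c i) v + i + 1 \<le> K - 1" using c(2) by blast
      then show ?thesis using C_def by (intro exI[of _ i]) auto
    next
      case False
      show ?thesis
      proof (cases "v = []")
        case True
        have "dst [] [] = 0" using dst_app[of "[]" "[]"] by simp
        then show ?thesis using True K1 C_def by (intro exI[of _ "K - 1"]) auto
      next
        case nn: False
        then have bW: "butlast v \<in> W" using leaf_parent vV False V_def W_def by blast
        then obtain i where i: "i < K - 1" "dst (c i) (butlast v) + i + 1 \<le> K - 1"
          using c(2) by blast
        have "v = butlast v @ [last v]" using nn by simp
        then have "dst (c i) v \<le> dst (c i) (butlast v) + 1" using dst_snoc by metis
        then show ?thesis using i C_def by (intro exI[of _ i]) auto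
      qed
    qed
  qed
  have "V \<noteq> {}" using nil_verts V_def by auto
  then obtain xs where xs: "burning_seq V fbt_adj xs" "length xs \<le> K"
    using greedy[OF _ _ CV cov] pc_verts V_def by blast
  have "burning_number V fbt_adj \<le> length xs"
    unfolding burning_number_def by (rule Least_le) (use xs(1) in blast)
  then show ?thesis using xs(2) V_def K_def by simp
qed

end
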